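(* (a) For every integer $n\ge 5$ and every $\epsilon>0$ there exists a convex $n$-gon $K$ such that $\Delta(K_1)/\Delta(K)<\epsilon$. (b) For every integer $n\ge 6$ and every $\epsilon>0$ there exists a convex $n$-gon $K$ such that $\Delta(K_1)/\Delta(K)>1-\epsilon$.
   Context: For a convex polygon $K=A_1A_2\ldots A_n$ ($n\ge 5$, vertices listed counterclockwise, indices taken modulo $n$), $K_1=B_1B_2\ldots B_n$ denotes the convex $n$-gon bounded by the short diagonals $A_1A_3, A_2A_4,\ldots,A_{n-1}A_1,A_nA_2$, where $B_i$ is the intersection point of the diagonals $A_{i-1}A_{i+1}$ and $A_iA_{i+2}$. $\Delta(\cdot)$ denotes area. *)

theory Defs
  imports "HOL-Analysis.Analysis"
begin

text \<open>Points of the plane are pairs of reals. A polygon with n vertices is given by a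
  function A :: nat => real * real, of which only A 0, ..., A (n-1) matter;
  indices are taken modulo n.\<close>

definition cross2 :: "real \<times> real \<Rightarrow> real \<times> real \<Rightarrow> real" where
  "cross2 u v = fst u * snd v - snd u * fst v"

definition vtx :: "nat \<Rightarrow> (nat \<Rightarrow> real \<times> real) \<Rightarrow> int \<Rightarrow> real \<times> real" where
  "vtx n A i = A (nat (i mod int n))"

text \<open>Strictly convex n-gon with vertices listed counterclockwise: every vertex other
  than the endpoints of an edge lies strictly to the left of that (directed) edge.\<close>
definition convex_ngon :: "nat \<Rightarrow> (nat \<Rightarrow> real \<times> real) \<Rightarrow> bool" where
  "convex_ngon n A \<longleftrightarrow> n \<ge> 3 \<and>
     (\<forall>i<n. \<forall>j<n. j \<noteq> i \<and> j \<noteq> (i + 1) mod n \<longrightarrow>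
        cross2 (A ((i + 1) mod n) - A i) (A j - A i) > 0)"

definition polygon_region :: "nat \<Rightarrow> (nat \<Rightarrow> real \<times> real) \<Rightarrow> (real \<times> real) set" where
  "polygon_region n A = convex hull (A ` {..<n})"

definition area :: "(real \<times> real) set \<Rightarrow> real" where
  "area S = measure lebesgue S"

definition Bpt :: "nat \<Rightarrow> (nat \<Rightarrow> real \<times> real) \<Rightarrow> nat \<Rightarrow> real \<times> real" where
  "Bpt n A i = (THE p. p \<in> closed_segment (vtx n A (int i - 1)) (vtx n A (int i + 1)) \<and>
                       p \<in> closed_segment (vtx n A (int i)) (vtx n A (int i + 2)))"

definition inner_region :: "nat \<Rightarrow> (nat \<Rightarrow> real \<times> real) \<Rightarrow> (real \<times> real) set" where
  "inner_region n A = convex hull (Bpt n A ` {..<n})"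

end

theory Submission
  imports Defs
begin

definition par :: "real \<Rightarrow> real \<times> real" where "par x = (x, -(x^2))"

definition Pt :: "real \<Rightarrow> real \<Rightarrow> real \<Rightarrow> real \<Rightarrow> real \<times> real" where
  "Pt a b c d = ((b*d - a*c)/(b+d-a-c), -(a+c)*((b*d - a*c)/(b+d-a-c)) + a*c)"

lemma cross_par: "cross2 (par b - par a) (par c - par a) = (b-a)*(c-a)*(b-c)"
  by (simp add: cross2_def par_def power2_eq_square algebra_simps)

lemma sign1: "(b::real) < a \<Longrightarrow> a < c \<Longrightarrow> (b-a)*(c-a)*(b-c) > 0"
proof -
  assume "b < a" "a < c"
  then have "(b-a)*(c-a) < 0" by (simp add: mult_neg_pos)
  moreover have "b - c < 0" using \<open>b<a\<close> \<open>a<c\<close> by simp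
  ultimately show ?thesis by (simp add: mult_neg_neg)
qed

lemma sign2: "(b::real) < a \<Longrightarrow> c < b \<Longrightarrow> (b-a)*(c-a)*(b-c) > 0"
proof -
  assume "b < a" "c < b"
  then have "(b-a)*(c-a) > 0" by (simp add: mult_neg_neg)
  moreover have "b - c > 0" using \<open>c<b\<close> by simp
  ultimately show ?thesis by simp
qed

lemma sign3: "(a::real) < c \<Longrightarrow> c < b \<Longrightarrow> (b-a)*(c-a)*(b-c) > 0"
  by simp

lemma convex_par:
  assumes n: "n \<ge> 3" and f0: "f 0 < f (n-1)" and dec: "\<And>k. 1 \<le> k \<Longrightarrow> k+1 < n \<Longrightarrow> f (k+1) < f k"
  shows "convex_ngon n (\<lambda>k. par (f k))"
proof -
  have dec2: "f k < f j" if "1 \<le> j" "j < k" "k < n" for j k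
    using that
  proof (induction k)
    case 0 then show ?case by simp
  next
    case (Suc k)
    show ?case
    proof (cases "j = k")
      case True then show ?thesis using dec[of k] Suc.prems by simp
    next
      case False
      then have "f k < f j" using Suc by simp
      moreover have "f (Suc k) < f k" using dec[of k] Suc.prems by simp
      ultimately show ?thesis by simp
    qed
  qed
  have dec3: "f k \<le> f j" if "1 \<le> j" "j \<le> k" "k < n" for j k
    using dec2[of j k] that by (cases "j = k") auto
  have lo: "f 0 < f k" if "1 \<le> k" "k < n" for k
  proof -
    have "f (n-1) \<le> f k" using dec3[of k "n-1"] that by simp
    then show ?thesis using f0 by simp
  qed
  show ?thesis
    unfolding convex_ngon_def
  proof (intro conjI allI impI n)
    fix i j assume ij: "i < n" "j < n" "j \<noteq> i \<and> j \<noteq> (i + 1) mod n"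
    show "0 < cross2 (par (f ((i + 1) mod n)) - par (f i)) (par (f j) - par (f i))"
      unfolding cross_par
    proof (cases "i = n - 1")
      case True
      then have "(i+1) mod n = 0" using n by simp
      then have "j \<noteq> 0" "j \<noteq> n-1" using ij True by auto
      then have "f i < f j" using dec2[of j "n-1"] True ij by simp
      moreover have "f 0 < f i" using True f0 by simp
      ultimately show "0 < (f ((i + 1) mod n) - f i) * (f j - f i) * (f ((i + 1) mod n) - f j)"
        using sign1 \<open>(i+1) mod n = 0\<close> by simp
    next
      case False
      then have im: "(i+1) mod n = i+1" using ij by simp
      show "0 < (f ((i + 1) mod n) - f i) * (f j - f i) * (f ((i + 1) mod n) - f j)"
      proof (cases "i = 0")
        case True
        then have "j \<ge> 2" using ij im by auto
        then have "f 0 < f j" "f j < f 1" using lo[of j] dec2[of 1 j] ij by auto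
        then show ?thesis using sign3 im True by simp
      next
        case False
        have bi: "f (i+1) < f i" using dec[of i] False \<open>i \<noteq> n-1\<close> ij by simp
        consider "j = 0" | "1 \<le> j" "j < i" | "i + 1 < j" using ij im by linarith
        then show ?thesis
        proof cases
          case 1
          then have "f j < f (i+1)" using lo[of "i+1"] False \<open>i \<noteq> n-1\<close> ij by simp
          then show ?thesis using sign2[OF bi] im by simp
        next
          case 2
          then have "f i < f j" using dec2[of j i] ij by simp
          then show ?thesis using sign1[OF bi] im by simp
        next
          case 3
          then have "f j < f (i+1)" using dec2[of "i+1" j] ij by simp
          then show ?thesis using sign2[OF bi] im by simp
        qed
      qed
    qed
  qed
qed

lemma seg_par_D:
  assumes "p \<in> closed_segment (par a) (par c)"
  shows "snd p = -(a+c)*fst p + a*c \<and> (fst p - a)*(fst p - c) \<le> 0"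
proof -
  obtain u where u: "0 \<le> u" "u \<le> 1" "p = (1-u) *\<^sub>R par a + u *\<^sub>R par c"
    using assms unfolding closed_segment_def by blast
  have fp: "fst p = a + u*(c-a)" using u by (simp add: par_def algebra_simps)
  have sp: "snd p = -(1-u)*a^2 - u*c^2" using u by (simp add: par_def algebra_simps)
  have "(fst p - a)*(fst p - c) = (u*(u-1))*(c-a)^2" unfolding fp by (simp add: power2_eq_square algebra_simps)
  moreover have "u*(u-1) \<le> 0" using u by (simp add: mult_nonneg_nonpos)
  ultimately have "(fst p - a)*(fst p - c) \<le> 0" by (simp add: mult_nonpos_nonneg)
  moreover have "snd p = -(a+c)*fst p + a*c" unfolding fp sp by (simp add: power2_eq_square algebra_simps)
  ultimately show ?thesis by simp
qed

lemma seg_par_I: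
  assumes ac: "a \<noteq> c" and l: "snd p = -(a+c)*fst p + a*c" and b: "(fst p - a)*(fst p - c) \<le> 0"
  shows "p \<in> closed_segment (par a) (par c)"
proof -
  define u where "u = (fst p - a)/(c-a)"
  have fp: "fst p = a + u*(c-a)" using ac by (simp add: u_def)
  have "(fst p - a)*(fst p - c) = (u*(u-1))*(c-a)^2" unfolding fp by (simp add: power2_eq_square algebra_simps)
  with b have "u*(u-1)*(c-a)^2 \<le> 0" by simp
  moreover have "(c-a)^2 > 0" using ac by simp
  ultimately have uu: "u*(u-1) \<le> 0" by (simp add: mult_le_0_iff)
  have u0: "0 \<le> u"
  proof (rule ccontr)
    assume "\<not> 0 \<le> u" then have "u*(u-1) > 0" by (simp add: mult_neg_neg)
    with uu show False by simp
  qed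
  have u1: "u \<le> 1"
  proof (rule ccontr)
    assume "\<not> u \<le> 1" then have "u*(u-1) > 0" by simp
    with uu show False by simp
  qed
  have "p = (1-u) *\<^sub>R par a + u *\<^sub>R par c"
  proof (rule prod_eqI)
    show "fst p = fst ((1-u) *\<^sub>R par a + u *\<^sub>R par c)" using fp by (simp add: par_def algebra_simps)
    show "snd p = snd ((1-u) *\<^sub>R par a + u *\<^sub>R par c)" using l fp by (simp add: par_def power2_eq_square algebra_simps)
  qed
  then show ?thesis unfolding closed_segment_def using u0 u1 by blast
qed

lemma cross_D: "(b-a)*(b-c)*(d-a)*(d-c) < (0::real) \<Longrightarrow> b+d-a-c \<noteq> 0"
proof
  assume h: "(b-a)*(b-c)*(d-a)*(d-c) < 0" "b+d-a-c = 0"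
  then have e: "d - a = -(b-c)" "d - c = -(b-a)" by simp_all
  have "(b-a)*(b-c)*(d-a)*(d-c) = ((b-a)*(b-c))^2" unfolding e by algebra
  with h show False by simp
qed

lemma neg_sq: "q * (D*D) < (0::real) \<Longrightarrow> q \<le> 0"
  by (auto simp: mult_less_0_iff)

lemma Pt_mem:
  assumes cr: "(b-a)*(b-c)*(d-a)*(d-c) < (0::real)"
  shows "Pt a b c d \<in> closed_segment (par a) (par c) \<and> Pt a b c d \<in> closed_segment (par b) (par d)"
proof -
  define D where "D = b+d-a-c"
  have D: "D \<noteq> 0" using cross_D[OF cr] D_def by simp
  define x where "x = (b*d - a*c)/D"
  have P: "Pt a b c d = (x, -(a+c)*x + a*c)" by (simp only: Pt_def x_def D_def)
  have sq4: "0 \<le> p*p*q*(q::real)" for p q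
  proof -
    have h: "p*p*q*q = (p*q)*(p*q)" by (simp add: ac_simps)
    show ?thesis unfolding h by (rule zero_le_square)
  qed
  have ac: "a \<noteq> c" using cr sq4[of "b-c" "d-c"] by (auto simp: not_less)
  have bd: "b \<noteq> d" using cr sq4[of "d-a" "d-c"] by (auto simp: ac_simps not_less)
  have xD: "x*D = b*d - a*c" using D by (simp add: x_def)
  have xa: "(x - a)*D = (b-a)*(d-a)"
  proof -
    have "(x-a)*D = x*D - a*(b+d-a-c)" by (simp add: algebra_simps D_def)
    also have "\<dots> = b*d - a*c - a*(b+d-a-c)" using xD by simp
    also have "\<dots> = (b-a)*(d-a)" by (simp add: algebra_simps)
    finally show ?thesis .
  qed
  have xc: "(x - c)*D = (b-c)*(d-c)"
  proof -
    have "(x-c)*D = x*D - c*(b+d-a-c)" by (simp add: algebra_simps D_def)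
    also have "\<dots> = b*d - a*c - c*(b+d-a-c)" using xD by simp
    also have "\<dots> = (b-c)*(d-c)" by (simp add: algebra_simps)
    finally show ?thesis .
  qed
  have xb: "(x - b)*D = -((b-a)*(b-c))"
  proof -
    have "(x-b)*D = x*D - b*(b+d-a-c)" by (simp add: algebra_simps D_def)
    also have "\<dots> = b*d - a*c - b*(b+d-a-c)" using xD by simp
    also have "\<dots> = -((b-a)*(b-c))" by (simp add: algebra_simps)
    finally show ?thesis .
  qed
  have xd: "(x - d)*D = -((d-a)*(d-c))"
  proof -
    have "(x-d)*D = x*D - d*(b+d-a-c)" by (simp add: algebra_simps D_def)
    also have "\<dots> = b*d - a*c - d*(b+d-a-c)" using xD by simp
    also have "\<dots> = -((d-a)*(d-c))" by (simp add: algebra_simps)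
    finally show ?thesis .
  qed
  have "((x-a)*(x-c))*(D*D) = ((x-a)*D)*((x-c)*D)" by (simp add: algebra_simps)
  also have "\<dots> = (b-a)*(b-c)*(d-a)*(d-c)" unfolding xa xc by (simp add: algebra_simps)
  finally have "((x-a)*(x-c))*(D*D) < 0" using cr by simp
  then have e1: "(x-a)*(x-c) \<le> 0" by (rule neg_sq)
  have "((x-b)*(x-d))*(D*D) = ((x-b)*D)*((x-d)*D)" by (simp add: algebra_simps)
  also have "\<dots> = (b-a)*(b-c)*(d-a)*(d-c)" unfolding xb xd by (simp add: algebra_simps)
  finally have "((x-b)*(x-d))*(D*D) < 0" using cr by simp
  then have e2: "(x-b)*(x-d) \<le> 0" by (rule neg_sq)
  have line: "-(a+c)*x + a*c = -(b+d)*x + b*d"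
  proof -
    have "-(b+d)*x + b*d = -(x*D) -(a+c)*x + b*d" by (simp add: D_def algebra_simps)
    also have "\<dots> = -(b*d - a*c) -(a+c)*x + b*d" using xD by simp
    also have "\<dots> = -(a+c)*x + a*c" by (simp add: algebra_simps)
    finally show ?thesis by simp
  qed
  show ?thesis unfolding P
    apply (intro conjI)
     apply (rule seg_par_I[OF ac]) using e1 apply simp_all
    apply (rule seg_par_I[OF bd]) using e2 line apply simp_all
    done
qed

lemma Pt_the:
  assumes cr: "(b-a)*(b-c)*(d-a)*(d-c) < (0::real)"
  shows "(THE p. p \<in> closed_segment (par a) (par c) \<and> p \<in> closed_segment (par b) (par d)) = Pt a b c d"
proof (rule the1_equality)
  show "Pt a b c d \<in> closed_segment (par a) (par c) \<and> Pt a b c d \<in> closed_segment (par b) (par d)"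
    using Pt_mem[OF cr] .
  have D: "b+d-a-c \<noteq> 0" using cross_D[OF cr] by simp
  have uniq: "p = Pt a b c d" if "p \<in> closed_segment (par a) (par c)" "p \<in> closed_segment (par b) (par d)" for p
  proof -
    have l1: "snd p = -(a+c)*fst p + a*c" using seg_par_D[OF that(1)] by simp
    have l2: "snd p = -(b+d)*fst p + b*d" using seg_par_D[OF that(2)] by simp
    have "fst p * (b+d-a-c) = b*d - a*c" using l1 l2 by (simp add: algebra_simps)
    then have fx: "fst p = (b*d - a*c)/(b+d-a-c)" using D by (simp add: field_simps)
    show ?thesis using l1 fx by (simp add: Pt_def prod_eq_iff)
  qed
  then show "\<exists>!p. p \<in> closed_segment (par a) (par c) \<and> p \<in> closed_segment (par b) (par d)"
    using Pt_mem[OF cr] by blast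
qed

lemma Pt_mirror: assumes "b+d-a-c \<noteq> (0::real)"
  shows "Pt (-d) (-c) (-b) (-a) = (- fst (Pt a b c d), snd (Pt a b c d))"
proof -
  define x where "x = (b*d - a*c)/(b+d-a-c)"
  have xD: "x * (b+d-a-c) = b*d - a*c" using assms by (simp add: x_def)
  have e: "(-c)*(-a) - (-d)*(-b) = -(b*d - a*c)" "(-c)+(-a)-(-d)-(-b) = b+d-a-c" by simp_all
  have 1: "((-c)*(-a) - (-d)*(-b))/((-c)+(-a)-(-d)-(-b)) = -x"
    unfolding e x_def by (simp add: minus_divide_left)
  have 2: "-(-d + -b) * -x + -d * -b = -(a+c)*x + a*c"
  proof -
    have "-(-d + -b) * -x + -d * -b = -(x*(b+d-a-c)) - (a+c)*x + b*d" by (simp add: algebra_simps)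
    also have "\<dots> = -(b*d - a*c) - (a+c)*x + b*d" using xD by simp
    also have "\<dots> = -(a+c)*x + a*c" by (simp add: algebra_simps)
    finally show ?thesis .
  qed
  show ?thesis unfolding Pt_def x_def[symmetric] 1 2 by simp
qed

lemma vtx_nat: "0 < n \<Longrightarrow> vtx n A (int k) = A (k mod n)"
  by (simp add: vtx_def flip: of_nat_mod)

lemma vtx_m1: "0 < n \<Longrightarrow> vtx n A (int i - 1) = A ((i + n - 1) mod n)"
proof -
  assume n: "0 < n"
  have "(int i - 1) mod int n = (int (i + n - 1) - int n) mod int n" using n by (simp add: of_nat_diff)
  also have "\<dots> = int (i + n - 1) mod int n" by (metis mod_add_self2 diff_add_cancel)
  finally show ?thesis by (simp add: vtx_def flip: of_nat_mod)
qed

lemma Bpt_par: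
  assumes n: "0 < n"
    and a: "f ((i + n - 1) mod n) = a" and b: "f (i mod n) = b"
    and c: "f ((i+1) mod n) = c" and d: "f ((i+2) mod n) = d"
    and cr: "(b-a)*(b-c)*(d-a)*(d-c) < 0"
  shows "Bpt n (\<lambda>k. par (f k)) i = Pt a b c d"
proof -
  have "vtx n (\<lambda>k. par (f k)) (int i + 1) = par c"
  proof -
    have e: "int i + 1 = int (i+1)" by simp
    have "vtx n (\<lambda>k. par (f k)) (int (i+1)) = par (f ((i+1) mod n))" by (rule vtx_nat[OF n])
    then show ?thesis using c by (simp only: e)
  qed
  moreover have "vtx n (\<lambda>k. par (f k)) (int i + 2) = par d"
  proof -
    have e: "int i + 2 = int (i+2)" by simp
    have "vtx n (\<lambda>k. par (f k)) (int (i+2)) = par (f ((i+2) mod n))" by (rule vtx_nat[OF n])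
    then show ?thesis using d by (simp only: e)
  qed
  moreover have "vtx n (\<lambda>k. par (f k)) (int i) = par b" using vtx_nat[OF n] b by simp
  moreover have "vtx n (\<lambda>k. par (f k)) (int i - 1) = par a" using vtx_m1[OF n] a by simp
  ultimately show ?thesis unfolding Bpt_def using Pt_the[OF cr] by simp
qed

lemma cross_dec: "(c::real) < b \<Longrightarrow> b < a \<Longrightarrow> d < c \<Longrightarrow> (b-a)*(b-c)*(d-a)*(d-c) < 0"
proof -
  assume h: "c < b" "b < a" "d < c"
  have "(b-a)*(b-c) < 0" using h by (simp add: mult_neg_pos)
  moreover have "(d-a)*(d-c) > 0" using h by (simp add: mult_neg_neg)
  ultimately have "((b-a)*(b-c))*((d-a)*(d-c)) < 0" by (simp add: mult_neg_pos)
  then show ?thesis by (simp add: mult.assoc)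
qed

definition Tri :: "(real \<times> real) set" where
  "Tri = convex hull {(0,0), (1,-1), (-1,-1)}"

lemma tri_mem:
  fixes x y h :: real
  assumes h: "-1 < h" and y: "-1 \<le> y" and x: "\<bar>x\<bar> \<le> h - y"
  shows "(x,y) \<in> convex hull {(0,h), (1+h,-1), (-(1+h),-1)}"
proof -
  have hp: "h+1 > 0" using h by simp
  define t where "t = (y+1)/(h+1)"
  define v where "v = ((1-t) + x/(1+h))/2"
  define w where "w = ((1-t) - x/(1+h))/2"
  have t0: "t \<ge> 0" using hp y by (simp add: t_def)
  have th: "t * (h+1) = y+1" using hp by (simp add: t_def)
  have omt: "(1 - t)*(h+1) = h - y" using th by (simp add: algebra_simps)
  have xd: "(x/(1+h))*(h+1) = x" using hp by (simp add: add.commute)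
  have "2 * v = (1-t) + x/(1+h)" by (simp add: v_def)
  then have "(2 * v)*(h+1) = (1-t)*(h+1) + (x/(1+h))*(h+1)" by (simp add: distrib_right)
  then have v2: "(2 * v)*(h+1) = (h-y) + x" using omt xd by simp
  have "2 * w = (1-t) - x/(1+h)" by (simp add: w_def)
  then have "(2 * w)*(h+1) = (1-t)*(h+1) - (x/(1+h))*(h+1)" by (simp add: left_diff_distrib)
  then have w2: "(2 * w)*(h+1) = (h-y) - x" using omt xd by simp
  have "(2 * v)*(h+1) \<ge> 0" using v2 x by simp
  then have v0: "v \<ge> 0" using hp by (simp add: zero_le_mult_iff)
  have "(2 * w)*(h+1) \<ge> 0" using w2 x by simp
  then have w0: "w \<ge> 0" using hp by (simp add: zero_le_mult_iff)
  have s1: "t + v + w = 1" by (simp add: v_def w_def field_simps)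
  have "(x,y) = t *\<^sub>R (0,h) + v *\<^sub>R (1+h,-1) + w *\<^sub>R (-(1+h),-1)"
  proof (rule prod_eqI)
    have "fst (t *\<^sub>R (0,h) + v *\<^sub>R (1+h,-1) + w *\<^sub>R (-(1+h),-1)) = ((2 * v)*(h+1) - (2 * w)*(h+1))/2"
      by (simp add: algebra_simps)
    then show "fst (x,y) = fst (t *\<^sub>R (0,h) + v *\<^sub>R (1+h,-1) + w *\<^sub>R (-(1+h),-1))" using v2 w2 by simp
    have "snd (t *\<^sub>R (0,h) + v *\<^sub>R (1+h,-1) + w *\<^sub>R (-(1+h),-1)) = t * (h+1) - (t + v + w)" by (simp add: algebra_simps)
    then show "snd (x,y) = snd (t *\<^sub>R (0,h) + v *\<^sub>R (1+h,-1) + w *\<^sub>R (-(1+h),-1))" using th s1 by simp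
  qed
  then show ?thesis unfolding convex_hull_3 using t0 v0 w0 s1 by blast
qed

lemma tri_mem0: "-1 \<le> (y::real) \<Longrightarrow> \<bar>x::real\<bar> \<le> - y \<Longrightarrow> (x,y) \<in> Tri"
  using tri_mem[of 0 y x] by (simp add: Tri_def)
lemma Tri_img:
  "(\<lambda>p. s *\<^sub>R p + t) ` Tri = convex hull {t, (s,-s) + t, (-s,-s) + t}"
proof -
  have "(\<lambda>p. s *\<^sub>R p + t) ` Tri = (\<lambda>p. t + s *\<^sub>R p) ` Tri" by (simp add: add.commute)
  also have "\<dots> = convex hull ((\<lambda>p. t + s *\<^sub>R p) ` {(0,0), (1,-1), (-1,-1)})"
    unfolding Tri_def by (rule convex_hull_affinity[symmetric])
  also have "(\<lambda>p. t + s *\<^sub>R p) ` {(0,0), (1,-1), (-1,-1)} = {t, (s,-s) + t, (-s,-s) + t}"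
  proof -
    have "(0::real,0::real) = 0" by (simp add: zero_prod_def)
    then show ?thesis by (simp add: add.commute)
  qed
  finally show ?thesis .
qed

lemma Tri_meas: "measure lebesgue ((\<lambda>p. s *\<^sub>R p + t) ` Tri) = s^2 * measure lebesgue Tri"
  using measure_lebesgue_affine[of s t Tri] by (simp add: power2_eq_square)

lemma hull_lmeas: "finite S \<Longrightarrow> convex hull S \<in> lmeasurable"
  by (intro lmeasurable_compact finite_imp_compact_convex_hull)

lemma Tri_lmeas: "Tri \<in> lmeasurable"
  unfolding Tri_def by (intro hull_lmeas) simp

lemma meas_mono: "A \<subseteq> B \<Longrightarrow> A \<in> lmeasurable \<Longrightarrow> B \<in> lmeasurable \<Longrightarrow> measure lebesgue A \<le> measure lebesgue B"
  by (rule measure_mono_fmeasurable) (auto dest: fmeasurableD)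

lemma meas_cbox: "a \<le> c \<Longrightarrow> b \<le> d \<Longrightarrow> measure lebesgue (cbox (a,b) (c,(d::real))) = (c-a)*(d-(b::real))"
proof -
  assume "a \<le> c" "b \<le> d"
  have "cbox (a,b) (c,d) \<in> sets lborel" by (simp add: borel_closed closed_cbox)
  then have "measure lebesgue (cbox (a,b) (c,d)) = measure lborel (cbox (a,b) (c,d))" by simp
  also have "\<dots> = (c-a)*(d-b)" using \<open>a \<le> c\<close> \<open>b \<le> d\<close> by (simp only: content_Pair) (simp add: cbox_interval)
  finally show ?thesis .
qed

lemma Tri_pos: "measure lebesgue Tri > 0"
proof -
  have sub: "cbox (-1/4::real, -1::real) (1/4, -1/2) \<subseteq> Tri"
  proof
    fix p :: "real \<times> real" assume "p \<in> cbox (-1/4, -1::real) (1/4, -1/2)"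
    then obtain x y :: real where p: "p = (x,y)" "-1/4 \<le> x" "x \<le> 1/4" "-1 \<le> y" "y \<le> -1/2"
      by (cases p) (auto simp: cbox_interval)
    then show "p \<in> Tri" using tri_mem0[of y x] by simp
  qed
  have "measure lebesgue (cbox (-1/4::real, -1::real) (1/4, -1/2)) \<le> measure lebesgue Tri"
    by (rule meas_mono[OF sub]) (auto simp: Tri_lmeas)
  moreover have "measure lebesgue (cbox (-1/4::real, -1::real) (1/4, -1/2)) = 1/4" by (subst meas_cbox) auto
  ultimately show ?thesis by simp
qed

lemma pp_pos1: "(x::real) < y \<Longrightarrow> x < z \<Longrightarrow> (x-y)*(x-z) > 0" by (simp add: mult_neg_neg)
lemma pp_pos2: "(y::real) < x \<Longrightarrow> z < x \<Longrightarrow> (x-y)*(x-z) > 0" by simp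
lemma pp_neg1: "(y::real) < x \<Longrightarrow> x < z \<Longrightarrow> (x-y)*(x-z) < 0" by (simp add: mult_pos_neg)
lemma pp_neg2: "(z::real) < x \<Longrightarrow> x < y \<Longrightarrow> (x-y)*(x-z) < 0" by (simp add: mult_neg_pos)

lemma crossA: "(b-a)*(b-c) > 0 \<Longrightarrow> (d-a)*(d-c) < (0::real) \<Longrightarrow> (b-a)*(b-c)*(d-a)*(d-c) < 0"
proof -
  assume "(b-a)*(b-c) > 0" "(d-a)*(d-c) < (0::real)"
  then have "((b-a)*(b-c))*((d-a)*(d-c)) < 0" by (simp add: mult_pos_neg)
  then show ?thesis by (simp add: mult.assoc)
qed

lemma crossB: "(b-a)*(b-c) < 0 \<Longrightarrow> (d-a)*(d-c) > (0::real) \<Longrightarrow> (b-a)*(b-c)*(d-a)*(d-c) < 0"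
proof -
  assume "(b-a)*(b-c) < 0" "(d-a)*(d-c) > (0::real)"
  then have "((b-a)*(b-c))*((d-a)*(d-c)) < 0" by (simp add: mult_neg_pos)
  then show ?thesis by (simp add: mult.assoc)
qed

lemma between:
  assumes "(x-a)*(x-c) \<le> (0::real)" "\<bar>a\<bar> \<le> e" "\<bar>c\<bar> \<le> e"
  shows "\<bar>x\<bar> \<le> e"
proof (rule ccontr)
  assume "\<not> \<bar>x\<bar> \<le> e"
  then have "e < x \<or> x < -e" by auto
  then have "(x-a)*(x-c) > 0"
  proof
    assume "e < x" then show ?thesis using assms by (intro pp_pos2) auto
  next
    assume "x < -e" then show ?thesis using assms by (intro pp_pos1) auto
  qed
  with assms show False by simp
qed

lemma seg_small:
  assumes p: "p \<in> closed_segment (par a) (par c)" and a: "\<bar>a\<bar> \<le> e" and c: "\<bar>c\<bar> \<le> e" and e: "e \<le> 1"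
  shows "\<bar>fst p\<bar> \<le> e \<and> \<bar>snd p\<bar> \<le> 3*e"
proof -
  have l: "snd p = -(a+c)*fst p + a*c" and b: "(fst p - a)*(fst p - c) \<le> 0" using seg_par_D[OF p] by auto
  have x: "\<bar>fst p\<bar> \<le> e" using between[OF b a c] .
  have e0: "0 \<le> e" using a by simp
  have "\<bar>a+c\<bar> \<le> 2*e" using a c by simp
  then have "\<bar>(a+c)*fst p\<bar> \<le> (2*e)*1" unfolding abs_mult using x e e0 by (intro mult_mono) auto
  moreover have "\<bar>a*c\<bar> \<le> e*1" unfolding abs_mult using a c e e0 by (intro mult_mono) auto
  moreover have "\<bar>snd p\<bar> \<le> \<bar>(a+c)*fst p\<bar> + \<bar>a*c\<bar>"
  proof -
    have l': "snd p = (-((a+c)*fst p)) + a*c" using l by (simp only: minus_mult_left)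
    show ?thesis unfolding l' using abs_triangle_ineq[of "-((a+c)*fst p)" "a*c"] by (simp only: abs_minus_cancel)
  qed
  ultimately have "\<bar>snd p\<bar> \<le> 3*e" by simp
  with x show ?thesis by simp
qed

lemma mod_facts:
  assumes n: "(n::nat) \<ge> 5"
  shows "(0 + n - 1) mod n = n - 1" "(n - 1 + n - 1) mod n = n - 2" "(n-1+1) mod n = 0" "(n-1+2) mod n = 1"
    "(n - 2 + n - 1) mod n = n - 3" "(n-2+1) mod n = n-1" "(n-2+2) mod n = 0"
    "(1 + n - 1) mod n = 0"
proof -
  show "(0 + n - 1) mod n = n - 1" using n by simp
  have "n - 1 + n - 1 = (n-2) + n" using n by simp
  then have "(n - 1 + n - 1) mod n = ((n-2) + n) mod n" by (simp only:)
  also have "\<dots> = (n-2) mod n" by (rule mod_add_self2)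
  finally show "(n - 1 + n - 1) mod n = n - 2" using n by simp
  show "(n-1+1) mod n = 0" using n by simp
  have "n-1+2 = 1 + n" using n by simp
  then have "(n-1+2) mod n = (1 + n) mod n" by (simp only:)
  also have "\<dots> = 1 mod n" by (rule mod_add_self2)
  finally show "(n-1+2) mod n = 1" using n by simp
  have "n - 2 + n - 1 = (n-3) + n" using n by simp
  then have "(n - 2 + n - 1) mod n = ((n-3) + n) mod n" by (simp only:)
  also have "\<dots> = (n-3) mod n" by (rule mod_add_self2)
  finally show "(n - 2 + n - 1) mod n = n - 3" using n by simp
  show "(n-2+1) mod n = n-1" using n by simp
  have "n-2+2 = n" using n by simp
  then show "(n-2+2) mod n = 0" by simp
  show "(1 + n - 1) mod n = 0" using n by simp
qed

lemma div_small: "1 \<le> (D::real) \<Longrightarrow> \<bar>p / D\<bar> \<le> \<bar>p\<bar>"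
proof -
  assume D: "1 \<le> D"
  have "\<bar>p / D\<bar> = \<bar>p\<bar> / D" using D by (simp add: abs_divide)
  also have "\<dots> \<le> \<bar>p\<bar> / 1" using D by (intro divide_left_mono) auto
  finally show ?thesis by simp
qed

lemma part_a:
  assumes n: "n \<ge> 5" and ep: "(\<epsilon>::real) > 0"
  shows "\<exists>A. convex_ngon n A \<and> area (inner_region n A) / area (polygon_region n A) < \<epsilon>"
proof -
  define m where "m = measure lebesgue Tri"
  have m0: "m > 0" using Tri_pos by (simp add: m_def)
  define \<delta> where "\<delta> = min (1/2) (\<epsilon>*m/800)"
  have d0: "0 < \<delta>" "\<delta> \<le> 1/2" "\<delta> \<le> \<epsilon>*m/800" using ep m0 by (auto simp: \<delta>_def)
  define f where "f = (\<lambda>k::nat. if k = 0 then -1 else if k = 1 then 1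
                       else \<delta>*(real n + 1 - 2*real k)/(real n - 3))"
  have n3: "real n - 3 > 0" using n by simp
  have f0: "f 0 = -1" and f1: "f 1 = 1" by (simp_all add: f_def)
  have f2: "f 2 = \<delta>" using n3 by (simp add: f_def)
  have f2': "f (Suc (Suc 0)) = \<delta>" using f2 by (simp add: numeral_2_eq_2)
  have fl: "f (n-1) = -\<delta>"
  proof -
    have r: "real (n-1) = real n - 1" using n by (simp add: of_nat_diff)
    have ne: "n - 1 \<noteq> 0" "n - 1 \<noteq> 1" using n by auto
    have "f (n-1) = \<delta>*(real n + 1 - 2*real (n-1))/(real n - 3)" unfolding f_def using ne by simp
    then have "f (n-1) = \<delta>*(real n + 1 - 2*(real n - 1))/(real n - 3)" unfolding r .
    also have "\<dots> = -\<delta>" using n3 by (simp add: field_simps)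
    finally show ?thesis .
  qed
  have fc: "\<bar>f k\<bar> \<le> \<delta>" if k: "2 \<le> k" "k \<le> n-1" for k
  proof -
    have fk: "f k = \<delta> * ((real n + 1 - 2*real k)/(real n - 3))" using k by (simp add: f_def)
    have "k + 1 \<le> n" using k n by simp
    then have "real (k+1) \<le> real n" by (simp only: of_nat_le_iff)
    then have k1: "real k + 1 \<le> real n" by simp
    have k2: "2 \<le> real k" using k by simp
    have "\<bar>real n + 1 - 2*real k\<bar> \<le> real n - 3" using k1 k2 by (simp add: abs_le_iff)
    then have r: "\<bar>(real n + 1 - 2*real k)/(real n - 3)\<bar> \<le> 1" using n3 by (simp add: abs_divide)
    have "\<bar>f k\<bar> = \<delta> * \<bar>(real n + 1 - 2*real k)/(real n - 3)\<bar>" using d0 unfolding fk by (simp add: abs_mult)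
    also have "\<dots> \<le> \<delta> * 1" using r d0 by (intro mult_left_mono) auto
    finally show ?thesis by simp
  qed
  have fdec1: "f (k+1) < f k" if k: "1 \<le> k" "k+1 < n" for k
  proof (cases "k = 1")
    case True
    have "f (1+1) = \<delta>" using f2 by (simp add: numeral_2_eq_2)
    then show ?thesis using True f1 d0 by simp
  next
    case False
    have "f k - f (k+1) = \<delta>*(real n + 1 - 2*real k)/(real n - 3) - \<delta>*(real n + 1 - 2*(real k + 1))/(real n - 3)"
      using k False by (simp add: f_def)
    also have "\<dots> = (\<delta>*(real n + 1 - 2*real k) - \<delta>*(real n + 1 - 2*(real k + 1)))/(real n - 3)"
      by (simp only: diff_divide_distrib)
    also have "\<dots> = 2*\<delta>/(real n - 3)"
      by (rule arg_cong[where f="\<lambda>t. t/(real n - 3)"]) (simp add: algebra_simps)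
    also have "\<dots> > 0" using d0 n3 by simp
    finally show ?thesis by simp
  qed
  define A where "A = (\<lambda>k. par (f k))"
  have conv: "convex_ngon n A" unfolding A_def
    by (rule convex_par) (use n fdec1 d0 f0 fl in auto)
  define Q where "Q = cbox (-5*\<delta>, -5*\<delta>) (5*\<delta>, 5*\<delta>)"
  have inQ: "p \<in> Q" if "\<bar>fst p\<bar> \<le> 5*\<delta>" "\<bar>snd p\<bar> \<le> 5*\<delta>" for p
    using that unfolding Q_def by (cases p) (auto simp: cbox_interval abs_le_iff)
  have n0: "0 < n" using n by simp
  have BQ: "Bpt n A i \<in> Q" if i: "i < n" for i
  proof -
    consider "i = 0" | "i = 1" | "2 \<le> i" "i + 2 \<le> n - 1" | "i = n - 2" | "i = n - 1"
      using i n by linarith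
    then show ?thesis
    proof cases
      case 1
      have cr: "((-1) - (-\<delta>))*((-1) - 1)*(\<delta> - (-\<delta>))*(\<delta> - 1) < (0::real)"
        by (rule crossA[OF pp_pos1 pp_neg1]) (use d0 in auto)
      have "Bpt n A i = Pt (-\<delta>) (-1) 1 \<delta>" unfolding A_def 1
        by (rule Bpt_par[OF n0 _ _ _ _ cr]) (use n f0 f1 f2 f2' fl in simp_all)
      also have "\<dots> = (0, -\<delta>)" by (simp add: Pt_def)
      finally show ?thesis using d0 by (intro inQ) auto
    next
      case 2
      define e where "e = f 3"
      have e: "\<bar>e\<bar> \<le> \<delta>" unfolding e_def using n by (intro fc) auto
      have e2: "e < \<delta>" using fdec1[of 2] n f2 by (simp add: e_def)
      have cr: "(1 - (-1))*(1 - \<delta>)*(e - (-1))*(e - \<delta>) < (0::real)"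
        by (rule crossA[OF pp_pos2 pp_neg1]) (use d0 e e2 in \<open>auto simp: abs_le_iff\<close>)
      have "Bpt n A i = Pt (-1) 1 \<delta> e" unfolding A_def 2
        by (rule Bpt_par[OF n0 _ _ _ _ cr]) (use n f0 f1 f2 f2' mod_facts(8)[OF n] in \<open>simp_all add: e_def numeral_3_eq_3\<close>)
      also have "\<dots> = ((e+\<delta>)/(2+e-\<delta>), (1-\<delta>)*((e+\<delta>)/(2+e-\<delta>)) - \<delta>)"
        by (simp add: Pt_def algebra_simps)
      finally have B: "Bpt n A i = ((e+\<delta>)/(2+e-\<delta>), (1-\<delta>)*((e+\<delta>)/(2+e-\<delta>)) - \<delta>)" .
      have D: "1 \<le> 2+e-\<delta>" using e d0 by (simp add: abs_le_iff)
      have X: "\<bar>(e+\<delta>)/(2+e-\<delta>)\<bar> \<le> 2*\<delta>"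
        using div_small[OF D, of "e+\<delta>"] e d0 by (simp add: abs_le_iff)
      define Z where "Z = (1-\<delta>)*((e+\<delta>)/(2+e-\<delta>))"
      have "\<bar>Z\<bar> \<le> 1 * (2*\<delta>)"
        unfolding Z_def abs_mult using X d0 by (intro mult_mono) auto
      then have "\<bar>Z - \<delta>\<bar> \<le> 5*\<delta>" using d0 by (simp add: abs_le_iff)
      then have Y: "\<bar>(1-\<delta>)*((e+\<delta>)/(2+e-\<delta>)) - \<delta>\<bar> \<le> 5*\<delta>" unfolding Z_def .
      show ?thesis unfolding B using X Y d0 by (intro inQ) auto
    next
      case 3
      have m1: "(i + n - 1) mod n = i - 1"
      proof -
        have "i + n - 1 = (i - 1) + n" using 3 by simp
        then have "(i + n - 1) mod n = ((i - 1) + n) mod n" by (simp only:)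
        also have "\<dots> = (i-1) mod n" by (rule mod_add_self2)
        finally show ?thesis using i by simp
      qed
      have ba: "f i < f (i-1)" using fdec1[of "i-1"] 3 by simp
      have cb: "f (i+1) < f i" using fdec1[of i] 3 by simp
      have dc: "f (i+2) < f (i+1)" using fdec1[of "i+1"] 3 by (simp add: add.assoc)
      have cr: "(f i - f (i-1))*(f i - f (i+1))*(f (i+2) - f (i-1))*(f (i+2) - f (i+1)) < 0"
        by (rule cross_dec[OF cb ba dc])
      have "Bpt n A i = Pt (f (i-1)) (f i) (f (i+1)) (f (i+2))" unfolding A_def
        by (rule Bpt_par[OF n0 _ _ _ _ cr]) (use 3 m1 in simp_all)
      then have sg: "Bpt n A i \<in> closed_segment (par (f i)) (par (f (i+2)))" using Pt_mem[OF cr] by simp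
      have h1: "\<bar>f i\<bar> \<le> \<delta>" and h2: "\<bar>f (i+2)\<bar> \<le> \<delta>" using 3 by (auto intro: fc)
      have "\<bar>fst (Bpt n A i)\<bar> \<le> \<delta> \<and> \<bar>snd (Bpt n A i)\<bar> \<le> 3*\<delta>"
        by (rule seg_small[OF sg h1 h2]) (use d0 in simp)
      then show ?thesis using d0 by (intro inQ) auto
    next
      case 4
      have ba: "f (n-2) < f (n-3)"
      proof -
        have "n - 3 + 1 = n - 2" using n by simp
        then show ?thesis using fdec1[of "n-3"] n by simp
      qed
      have cb: "f (n-1) < f (n-2)"
      proof -
        have "n - 2 + 1 = n - 1" using n by simp
        then show ?thesis using fdec1[of "n-2"] n by simp
      qed
      have dc: "f 0 < f (n-1)" using f0 fl d0 by simp
      have cr: "(f (n-2) - f (n-3))*(f (n-2) - f (n-1))*(f 0 - f (n-3))*(f 0 - f (n-1)) < 0"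
        by (rule cross_dec[OF cb ba dc])
      have "Bpt n A i = Pt (f (n-3)) (f (n-2)) (f (n-1)) (f 0)" unfolding A_def 4
        by (rule Bpt_par[OF n0 _ _ _ _ cr]) (use n mod_facts[OF n] in simp_all)
      then have sg: "Bpt n A i \<in> closed_segment (par (f (n-3))) (par (f (n-1)))" using Pt_mem[OF cr] by simp
      have h1: "\<bar>f (n-3)\<bar> \<le> \<delta>" and h2: "\<bar>f (n-1)\<bar> \<le> \<delta>" using n by (auto intro: fc)
      have "\<bar>fst (Bpt n A i)\<bar> \<le> \<delta> \<and> \<bar>snd (Bpt n A i)\<bar> \<le> 3*\<delta>"
        by (rule seg_small[OF sg h1 h2]) (use d0 in simp)
      then show ?thesis using d0 by (intro inQ) auto
    next
      case 5
      define e where "e = f (n-2)"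
      have e: "\<bar>e\<bar> \<le> \<delta>" unfolding e_def using n by (intro fc) auto
      have e2: "-\<delta> < e"
      proof -
        have "n - 2 + 1 = n - 1" using n by simp
        then show ?thesis using fdec1[of "n-2"] n fl by (simp add: e_def)
      qed
      have cr: "((-\<delta>) - e)*((-\<delta>) - (-1))*(1 - e)*(1 - (-1)) < (0::real)"
        by (rule crossB[OF pp_neg2 pp_pos2]) (use d0 e e2 in \<open>auto simp: abs_le_iff\<close>)
      have "Bpt n A i = Pt e (-\<delta>) (-1) 1" unfolding A_def 5
        by (rule Bpt_par[OF n0 _ _ _ _ cr]) (use n f0 f1 fl mod_facts[OF n] in \<open>simp_all add: e_def\<close>)
      also have "\<dots> = ((e-\<delta>)/(2-\<delta>-e), (1-e)*((e-\<delta>)/(2-\<delta>-e)) - e)"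
        by (simp add: Pt_def algebra_simps)
      finally have B: "Bpt n A i = ((e-\<delta>)/(2-\<delta>-e), (1-e)*((e-\<delta>)/(2-\<delta>-e)) - e)" .
      have D: "1 \<le> 2-\<delta>-e" using e d0 by (simp add: abs_le_iff)
      have X: "\<bar>(e-\<delta>)/(2-\<delta>-e)\<bar> \<le> 2*\<delta>"
        using div_small[OF D, of "e-\<delta>"] e d0 by (simp add: abs_le_iff)
      define Z where "Z = (1-e)*((e-\<delta>)/(2-\<delta>-e))"
      have "\<bar>Z\<bar> \<le> (3/2) * (2*\<delta>)"
        unfolding Z_def abs_mult using X d0 e by (intro mult_mono) (auto simp: abs_le_iff)
      then have "\<bar>Z - e\<bar> \<le> 5*\<delta>" using d0 e by (simp add: abs_le_iff)
      then have Y: "\<bar>(1-e)*((e-\<delta>)/(2-\<delta>-e)) - e\<bar> \<le> 5*\<delta>" unfolding Z_def .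
      show ?thesis unfolding B using X Y d0 by (intro inQ) auto
    qed
  qed
  have inner_sub: "inner_region n A \<subseteq> Q"
  proof -
    have "Bpt n A ` {..<n} \<subseteq> Q" using BQ by auto
    then show ?thesis unfolding inner_region_def by (rule hull_minimal) (simp add: Q_def)
  qed
  have in_meas: "inner_region n A \<in> lmeasurable" unfolding inner_region_def by (intro hull_lmeas) simp
  have out_meas: "polygon_region n A \<in> lmeasurable" unfolding polygon_region_def by (intro hull_lmeas) simp
  have aQ: "measure lebesgue Q = (10*\<delta>)*(10*\<delta>)" unfolding Q_def using d0 by (subst meas_cbox) auto
  have ain: "area (inner_region n A) \<le> (10*\<delta>)*(10*\<delta>)"
    unfolding area_def aQ[symmetric] by (rule meas_mono[OF inner_sub in_meas]) (simp add: Q_def)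
  define S where "S = polygon_region n A"
  have cS: "convex S" unfolding S_def polygon_region_def by simp
  have vS: "A k \<in> S" if "k < n" for k unfolding S_def polygon_region_def
    by (rule hull_inc) (use that in auto)
  have P0: "A 0 = (-1,-1)" "A 1 = (1,-1)" "A 2 = (\<delta>, - (\<delta>^2))" "A (n-1) = (-\<delta>, - (\<delta>^2))"
  proof -
    have f1': "f (Suc 0) = 1" using f1 by simp
    have fl': "f (n - Suc 0) = -\<delta>" using fl by simp
    show "A 0 = (-1,-1)" "A 1 = (1,-1)" "A 2 = (\<delta>, - (\<delta>^2))" "A (n-1) = (-\<delta>, - (\<delta>^2))"
      by (simp_all add: A_def par_def f0 f1' f2 fl')
  qed
  have S0: "(-1,-1) \<in> S" "(1,-1) \<in> S" "(\<delta>, - (\<delta>^2)) \<in> S" "(-\<delta>, - (\<delta>^2)) \<in> S"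
    using vS[of 0] vS[of 1] vS[of 2] vS[of "n-1"] n P0 by auto
  have q1: "(1/2, -1) \<in> S"
  proof -
    have "(1/4::real) *\<^sub>R (-1,-1) + (3/4::real) *\<^sub>R (1,-1) \<in> S" using S0 by (intro convexD[OF cS]) auto
    then show ?thesis by simp
  qed
  have q2: "(-1/2, -1) \<in> S"
  proof -
    have "(3/4::real) *\<^sub>R (-1,-1) + (1/4::real) *\<^sub>R (1,-1) \<in> S" using S0 by (intro convexD[OF cS]) auto
    then show ?thesis by simp
  qed
  have M1: "(0, -1) \<in> S"
  proof -
    have "(1/2::real) *\<^sub>R (-1,-1) + (1/2::real) *\<^sub>R (1,-1) \<in> S" using S0 by (intro convexD[OF cS]) auto
    then show ?thesis by simp
  qed
  have M2: "(0, - (\<delta>^2)) \<in> S"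
  proof -
    have "(1/2::real) *\<^sub>R (\<delta>, - (\<delta>^2)) + (1/2::real) *\<^sub>R (-\<delta>, - (\<delta>^2)) \<in> S" using S0 by (intro convexD[OF cS]) auto
    then show ?thesis by simp
  qed
  have q3: "(0, -1/2) \<in> S"
  proof -
    define l where "l = 1/(2*(1- (\<delta>^2)))"
    have "\<delta>*\<delta> \<le> (1/2)*(1/2)" using d0 by (intro mult_mono) auto
    then have dd: "\<delta>^2 \<le> 1/4" by (simp add: power2_eq_square)
    have l0: "0 \<le> l" "l \<le> 1" using dd by (auto simp: l_def field_simps)
    have "(1 - l) *\<^sub>R (0::real, -1::real) + l *\<^sub>R (0, - (\<delta>^2)) \<in> S" using M1 M2 l0 by (intro convexD[OF cS]) auto
    moreover have "(1 - l) *\<^sub>R (0::real, -1::real) + l *\<^sub>R (0, - (\<delta>^2)) = (0, -1/2)"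
    proof -
      have ne: "1 - \<delta>^2 \<noteq> 0" using dd by simp
      have lm: "l*(1-\<delta>^2) = 1/2" using ne by (simp add: l_def)
      have "-(1-l) + l*(-(\<delta>^2)) = -1 + l*(1-\<delta>^2)" by (simp add: algebra_simps)
      also have "\<dots> = -1/2" using lm by simp
      finally have sn: "-(1-l) + l*(-(\<delta>^2)) = -1/2" .
      show ?thesis using sn by simp
    qed
    ultimately show ?thesis by simp
  qed
  have Ta: "(\<lambda>p. (1/2::real) *\<^sub>R p + (0,-1/2)) ` Tri \<subseteq> S"
    unfolding Tri_img by (rule hull_minimal) (use q1 q2 q3 cS in auto)
  have Ta_meas: "(\<lambda>p. (1/2::real) *\<^sub>R p + (0,-1/2)) ` Tri \<in> lmeasurable"
    unfolding Tri_img by (intro hull_lmeas) simp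
  have aout: "m/4 \<le> area (polygon_region n A)"
  proof -
    have "measure lebesgue ((\<lambda>p. (1/2::real) *\<^sub>R p + (0,-1/2)) ` Tri) \<le> measure lebesgue S"
      by (rule meas_mono[OF Ta Ta_meas]) (simp add: S_def out_meas)
    then show ?thesis unfolding Tri_meas area_def S_def m_def by (simp add: power2_eq_square)
  qed
  have ain0: "0 \<le> area (inner_region n A)" unfolding area_def by simp
  have "area (inner_region n A) / area (polygon_region n A) \<le> ((10*\<delta>)*(10*\<delta>)) / (m/4)"
    by (rule frac_le) (use ain ain0 aout m0 in auto)
  also have "\<dots> < \<epsilon>"
  proof -
    have "\<delta>*\<delta> \<le> \<delta>*(1/2)" using d0 by (intro mult_left_mono) auto
    then have "(10*\<delta>)*(10*\<delta>) \<le> 50*\<delta>" by simp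
    also have "\<dots> \<le> 50*(\<epsilon>*m/800)" using d0 by simp
    also have "\<dots> < \<epsilon>*(m/4)" using ep m0 by simp
    finally show ?thesis using m0 by (simp add: divide_less_eq)
  qed
  finally show ?thesis using conv by blast
qed

lemma Bpt_mid:
  assumes "1 \<le> i" "i + 2 < n"
    and cr: "(f i - f (i-1))*(f i - f (i+1))*(f (i+2) - f (i-1))*(f (i+2) - f (i+1)) < 0"
  shows "Bpt n (\<lambda>k. par (f k)) i = Pt (f (i-1)) (f i) (f (i+1)) (f (i+2))"
proof -
  have n0: "0 < n" using assms by simp
  have m1: "(i + n - 1) mod n = i - 1"
  proof -
    have "i + n - 1 = (i - 1) + n" using assms by simp
    then have "(i + n - 1) mod n = ((i - 1) + n) mod n" by (simp only:)
    also have "\<dots> = (i-1) mod n" by (rule mod_add_self2)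
    finally show ?thesis using assms by simp
  qed
  show ?thesis by (rule Bpt_par[OF n0 _ _ _ _ cr]) (use assms m1 in simp_all)
qed

lemma vert_ok:
  fixes x \<eta> :: real
  assumes e: "0 < \<eta>" "\<eta> \<le> 1" and x: "\<bar>x\<bar> \<le> \<eta> \<or> (1 - \<eta> \<le> \<bar>x\<bar> \<and> \<bar>x\<bar> \<le> 1)"
  shows "-1 \<le> -(x^2) \<and> \<bar>x\<bar> \<le> \<eta> - (-(x^2))"
proof -
  have x1: "\<bar>x\<bar> \<le> 1" using x e by auto
  have sq: "x^2 = \<bar>x\<bar>*\<bar>x\<bar>" by (simp add: power2_eq_square abs_mult_self_eq)
  have "\<bar>x\<bar>*\<bar>x\<bar> \<le> 1*1" using x1 by (intro mult_mono) auto
  then have a: "-1 \<le> -(x^2)" unfolding sq by simp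
  have "\<bar>x\<bar> - \<bar>x\<bar>*\<bar>x\<bar> \<le> \<eta>"
  proof (cases "\<bar>x\<bar> \<le> \<eta>")
    case True
    have "0 \<le> \<bar>x\<bar>*\<bar>x\<bar>" by simp
    then show ?thesis using True by linarith
  next
    case False
    then have x2: "1 - \<eta> \<le> \<bar>x\<bar>" using x by auto
    have "\<bar>x\<bar> - \<bar>x\<bar>*\<bar>x\<bar> = (1 - \<bar>x\<bar>)*\<bar>x\<bar>" by (simp add: algebra_simps)
    also have "\<dots> \<le> (1 - \<bar>x\<bar>)*1" using x1 by (intro mult_left_mono) auto
    finally show ?thesis using x2 by simp
  qed
  then show ?thesis using a unfolding sq by simp
qed

lemma nhalf: "(n::nat) \<ge> 7 \<Longrightarrow> 3 \<le> n div 2 \<and> n div 2 + 4 \<le> n"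
proof -
  assume n: "n \<ge> 7"
  have "n div 2 * 2 + n mod 2 = n" by (rule div_mult_mod_eq)
  moreover have "n mod 2 < 2" by simp
  ultimately show ?thesis using n by linarith
qed

lemma part_b:
  assumes n: "n \<ge> 6" and ep: "(\<epsilon>::real) > 0"
  shows "\<exists>A. convex_ngon n A \<and> area (inner_region n A) / area (polygon_region n A) > 1 - \<epsilon>"
proof -
  define m where "m = measure lebesgue Tri"
  have m0: "m > 0" using Tri_pos by (simp add: m_def)
  define \<eta> where "\<eta> = min (1/20) (\<epsilon>/20)"
  have e0: "0 < \<eta>" "\<eta> \<le> 1/20" "\<eta> \<le> \<epsilon>/20" using ep by (auto simp: \<eta>_def)
  define f where "f = (\<lambda>k::nat. if k = 0 then -1 else if k = 1 then 1 else if k = 2 then 1 - \<eta>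
                       else if k = n - 1 then -1 + \<eta> else \<eta>*(real n + 1 - 2*real k)/(real n - 5))"
  have n5: "real n - 5 > 0" using n by simp
  have f0: "f 0 = -1" and f1: "f 1 = 1" and f2: "f 2 = 1 - \<eta>" by (simp_all add: f_def)
  have fl: "f (n-1) = -1 + \<eta>"
  proof -
    have ne: "n - 1 \<noteq> 0" "n - 1 \<noteq> 1" "n - 1 \<noteq> 2" using n by auto
    then show ?thesis unfolding f_def by simp
  qed
  have fapex: "f k = \<eta>*(real n + 1 - 2*real k)/(real n - 5)" if "3 \<le> k" "k \<le> n-2" for k
  proof -
    have ne: "k \<noteq> 0" "k \<noteq> 1" "k \<noteq> 2" "k \<noteq> n - 1" using that n by auto
    then show ?thesis unfolding f_def by simp
  qed
  have f3: "f 3 = \<eta>" using fapex[of 3] n n5 by simp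
  have fl2: "f (n-2) = -\<eta>"
  proof -
    have r: "real (n-2) = real n - 2" using n by (simp add: of_nat_diff)
    have "f (n-2) = \<eta>*(real n + 1 - 2*real (n-2))/(real n - 5)" using fapex[of "n-2"] n by simp
    also have "\<dots> = \<eta>*(-(real n - 5))/(real n - 5)" unfolding r by (simp add: algebra_simps)
    also have "\<dots> = -(\<eta>*(real n - 5)/(real n - 5))" by (simp only: mult_minus_right minus_divide_left)
    also have "\<dots> = -\<eta>" using n5 by simp
    finally show ?thesis .
  qed
  have fc: "\<bar>f k\<bar> \<le> \<eta>" if k: "3 \<le> k" "k \<le> n-2" for k
  proof -
    have fk: "f k = \<eta> * ((real n + 1 - 2*real k)/(real n - 5))" using fapex[OF k] by simp
    have "k + 2 \<le> n" using k n by simp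
    then have "real (k+2) \<le> real n" by (simp only: of_nat_le_iff)
    then have k1: "real k + 2 \<le> real n" by simp
    have k2: "3 \<le> real k" using k by simp
    have "\<bar>real n + 1 - 2*real k\<bar> \<le> real n - 5" using k1 k2 by (simp add: abs_le_iff)
    then have r: "\<bar>(real n + 1 - 2*real k)/(real n - 5)\<bar> \<le> 1" using n5 by (simp add: abs_divide)
    have "\<bar>f k\<bar> = \<eta> * \<bar>(real n + 1 - 2*real k)/(real n - 5)\<bar>" using e0 unfolding fk by (simp add: abs_mult)
    also have "\<dots> \<le> \<eta> * 1" using r e0 by (intro mult_left_mono) auto
    finally show ?thesis by simp
  qed
  have fdec1: "f (k+1) < f k" if k: "1 \<le> k" "k+1 < n" for k
  proof -
    consider "k = 1" | "k = 2" | "3 \<le> k" "k + 1 \<le> n - 2" | "k + 1 = n - 1" using k by linarith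
    then show ?thesis
    proof cases
      case 1
      have "f (1+1) = 1 - \<eta>" using f2 by (simp add: numeral_2_eq_2)
      then show ?thesis using 1 f1 e0 by simp
    next
      case 2
      have "f (2+1) = \<eta>" using f3 by simp
      then show ?thesis using 2 f2 e0 by simp
    next
      case 3
      have "f k - f (k+1) = \<eta>*(real n + 1 - 2*real k)/(real n - 5) - \<eta>*(real n + 1 - 2*(real k + 1))/(real n - 5)"
        using 3 fapex[of k] fapex[of "k+1"] by simp
      also have "\<dots> = (\<eta>*(real n + 1 - 2*real k) - \<eta>*(real n + 1 - 2*(real k + 1)))/(real n - 5)"
        by (simp only: diff_divide_distrib)
      also have "\<dots> = 2*\<eta>/(real n - 5)"
        by (rule arg_cong[where f="\<lambda>t. t/(real n - 5)"]) (simp add: algebra_simps)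
      also have "\<dots> > 0" using e0 n5 by simp
      finally show ?thesis by simp
    next
      case 4
      then have "k = n - 2" by simp
      then show ?thesis using 4 fl fl2 e0 by simp
    qed
  qed
  have fsym: "f (n + 1 - k) = - f k" if k: "2 \<le> k" "k \<le> n-1" for k
  proof -
    consider "k = 2" | "k = n - 1" | "3 \<le> k" "k \<le> n - 2" using k by linarith
    then show ?thesis
    proof cases
      case 1
      then have "n + 1 - k = n - 1" by simp
      then show ?thesis using 1 fl f2 by simp
    next
      case 2
      then have "n + 1 - k = 2" using n by simp
      then show ?thesis using 2 fl f2 by simp
    next
      case 3
      have k': "3 \<le> n + 1 - k" "n + 1 - k \<le> n - 2" using 3 n by auto
      have r: "real (n + 1 - k) = real n + 1 - real k" using 3 n by (simp add: of_nat_diff)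
      have "f (n + 1 - k) = \<eta>*(real n + 1 - 2*real (n + 1 - k))/(real n - 5)" using fapex[OF k'] by simp
      also have "\<dots> = \<eta>*(-(real n + 1 - 2*real k))/(real n - 5)" unfolding r by (simp add: algebra_simps)
      also have "\<dots> = -(\<eta>*(real n + 1 - 2*real k)/(real n - 5))" by (simp only: mult_minus_right minus_divide_left)
      also have "\<dots> = - f k" using fapex[OF 3] by simp
      finally show ?thesis .
    qed
  qed
  define A where "A = (\<lambda>k. par (f k))"
  have conv: "convex_ngon n A" unfolding A_def
    by (rule convex_par) (use n fdec1 e0 f0 fl in auto)
  define PR where "PR = polygon_region n A"
  define IR where "IR = inner_region n A"
  have cPR: "convex PR" unfolding PR_def polygon_region_def by simp
  have cIR: "convex IR" unfolding IR_def inner_region_def by simp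
  define IS where "IS = IR \<inter> PR"
  have cIS: "convex IS" unfolding IS_def using cIR cPR by (rule convex_Int)
  have vPR: "par (f k) \<in> PR" if "k < n" for k unfolding PR_def polygon_region_def A_def
    by (rule hull_inc) (use that in auto)
  have segPR: "closed_segment (par (f k)) (par (f l)) \<subseteq> PR" if "k < n" "l < n" for k l
    using closed_segment_subset[OF vPR[OF that(1)] vPR[OF that(2)] cPR] .
  have bIR: "Bpt n A k \<in> IR" if "k < n" for k unfolding IR_def inner_region_def
    by (rule hull_inc) (use that in auto)
  define u where "u = 1/(1+2*\<eta>)"
  have u1: "u*(1+2*\<eta>) = 1" using e0 by (simp add: u_def)
  have u0: "0 < u" "u \<le> 1" using e0 by (auto simp: u_def)
  define v where "v = \<eta>*u - 1 + \<eta>"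
  have n0: "0 < n" using n by simp
  have crR: "(f 1 - f (1-1))*(f 1 - f (1+1))*(f (1+2) - f (1-1))*(f (1+2) - f (1+1)) < 0"
  proof -
    have "(1 - (-1))*(1 - (1-\<eta>))*(\<eta> - (-1))*(\<eta> - (1-\<eta>)) < (0::real)"
      by (rule crossA[OF pp_pos2 pp_neg1]) (use e0 in auto)
    then show ?thesis using f0 f1 f2 f3 by (simp add: numeral_2_eq_2 numeral_3_eq_3)
  qed
  have BR: "Bpt n A 1 = Pt (f 0) (f 1) (f 2) (f 3)"
    using Bpt_mid[of 1 n f, OF _ _ crR] n by (simp add: A_def numeral_2_eq_2 numeral_3_eq_3)
  have BR': "Pt (f 0) (f 1) (f 2) (f 3) = (u, v)"
  proof -
    have "Pt (f 0) (f 1) (f 2) (f 3) = (1/(1+2*\<eta>), \<eta>*(1/(1+2*\<eta>)) - 1 + \<eta>)"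
      unfolding f0 f1 f2 f3 Pt_def by (simp add: algebra_simps)
    then show ?thesis by (simp add: u_def v_def)
  qed
  have R_IS: "(u, v) \<in> IS"
  proof -
    have crR': "(f 1 - f 0)*(f 1 - f 2)*(f 3 - f 0)*(f 3 - f 2) < 0" using crR by (simp add: numeral_2_eq_2 numeral_3_eq_3)
    have "Pt (f 0) (f 1) (f 2) (f 3) \<in> closed_segment (par (f 0)) (par (f 2))" using Pt_mem[OF crR'] by simp
    then have "(u,v) \<in> PR" using segPR[of 0 2] n BR' by auto
    moreover have "(u,v) \<in> IR" using bIR[of 1] n BR BR' by simp
    ultimately show ?thesis by (simp add: IS_def)
  qed
  have crL: "(f (n-1) - f (n-2))*(f (n-1) - f 0)*(f 1 - f (n-2))*(f 1 - f 0) < 0"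
  proof -
    have "((-1+\<eta>) - (-\<eta>))*((-1+\<eta>) - (-1))*(1 - (-\<eta>))*(1 - (-1)) < (0::real)"
      by (rule crossB[OF pp_neg2 pp_pos2]) (use e0 in auto)
    then show ?thesis using f0 f1 fl fl2 by simp
  qed
  have BL: "Bpt n A (n-1) = Pt (f (n-2)) (f (n-1)) (f 0) (f 1)"
    unfolding A_def by (rule Bpt_par[OF n0 _ _ _ _ crL]) (use n mod_facts[of n] in simp_all)
  have BL': "Pt (f (n-2)) (f (n-1)) (f 0) (f 1) = (-u, v)"
  proof -
    have num: "(-1+\<eta>)*1 - (-\<eta>)*(-1) = -1" by simp
    have den: "(-1+\<eta>) + 1 - (-\<eta>) - (-1) = 1 + 2*\<eta>" by simp
    have X: "((-1+\<eta>)*1 - (-\<eta>)*(-1)) / ((-1+\<eta>) + 1 - (-\<eta>) - (-1)) = -u"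
      unfolding num den u_def by simp
    have Y: "-(-\<eta> + -1)*(-u) + (-\<eta>)*(-1) = v"
    proof -
      have "-(-\<eta> + -1)*(-u) + (-\<eta>)*(-1) = \<eta>*u - 1 + \<eta> + (1 - u*(1+2*\<eta>))" by (simp add: algebra_simps)
      then show ?thesis using u1 by (simp add: v_def)
    qed
    show ?thesis unfolding f0 f1 fl fl2 Pt_def X Y ..
  qed
  have L_IS: "(-u, v) \<in> IS"
  proof -
    have "Pt (f (n-2)) (f (n-1)) (f 0) (f 1) \<in> closed_segment (par (f (n-2))) (par (f 0))" using Pt_mem[OF crL] by simp
    then have "(-u,v) \<in> PR" using segPR[of "n-2" 0] n BL' by auto
    moreover have "(-u,v) \<in> IR" using bIR[of "n-1"] n BL BL' by simp
    ultimately show ?thesis by (simp add: IS_def)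
  qed
  have apex: "\<exists>w. (0, w) \<in> IS \<and> -3*\<eta> \<le> w"
  proof (cases "n = 6")
    case True
    have cr: "(f 3 - f (3-1))*(f 3 - f (3+1))*(f (3+2) - f (3-1))*(f (3+2) - f (3+1)) < 0"
    proof -
      have "f (3+1) = -\<eta>" "f (3+2) = -1+\<eta>" "f (3-1) = 1-\<eta>" using fl fl2 f2 True by simp_all
      moreover have "(\<eta> - (1-\<eta>))*(\<eta> - (-\<eta>))*((-1+\<eta>) - (1-\<eta>))*((-1+\<eta>) - (-\<eta>)) < 0"
        by (rule cross_dec) (use e0 in auto)
      ultimately show ?thesis using f3 by simp
    qed
    have B3: "Bpt n A 3 = Pt (f 2) (f 3) (f 4) (f 5)"
      using Bpt_mid[of 3 n f, OF _ _ cr] True by (simp add: A_def)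
    have B3': "Pt (f 2) (f 3) (f 4) (f 5) = (0, -((1-\<eta>)*\<eta>))"
    proof -
      have h4: "f 4 = -\<eta>" and h5: "f 5 = -1+\<eta>" using fl fl2 True by simp_all
      have num: "\<eta>*(-1+\<eta>) - (1-\<eta>)*(-\<eta>) = 0" by (simp add: algebra_simps)
      show ?thesis unfolding f2 f3 h4 h5 Pt_def num by simp
    qed
    have cr': "(f 3 - f 2)*(f 3 - f 4)*(f 5 - f 2)*(f 5 - f 4) < 0" using cr by simp
    have "Pt (f 2) (f 3) (f 4) (f 5) \<in> closed_segment (par (f 2)) (par (f 4))" using Pt_mem[OF cr'] by simp
    then have "(0, -((1-\<eta>)*\<eta>)) \<in> PR" using segPR[of 2 4] True B3' by auto
    moreover have "(0, -((1-\<eta>)*\<eta>)) \<in> IR" using bIR[of 3] True B3 B3' by simp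
    moreover have "-3*\<eta> \<le> -((1-\<eta>)*\<eta>)"
    proof -
      have h: "0 \<le> \<eta>*\<eta>" by simp
      have eq: "-((1-\<eta>)*\<eta>) = \<eta>*\<eta> - \<eta>" by (simp add: algebra_simps)
      show ?thesis using h eq e0 by linarith
    qed
    ultimately show ?thesis unfolding IS_def by blast
  next
    case False
    then have n7: "n \<ge> 7" using n by simp
    define i where "i = n div 2"
    have i: "3 \<le> i" "i + 4 \<le> n" using nhalf[OF n7] by (simp_all add: i_def)
    define a b c d where "a = f (i-1)" "b = f i" "c = f (i+1)" "d = f (i+2)"
    have ba: "b < a" using fdec1[of "i-1"] i by (simp add: a_b_c_d_def)
    have cb: "c < b" using fdec1[of i] i by (simp add: a_b_c_d_def)
    have dc: "d < c" using fdec1[of "i+1"] i by (simp add: a_b_c_d_def add.assoc)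
    have cr: "(b-a)*(b-c)*(d-a)*(d-c) < 0" by (rule cross_dec[OF cb ba dc])
    have Bi: "Bpt n A i = Pt a b c d"
      using Bpt_mid[of i n f] cr i by (simp add: A_def a_b_c_d_def)
    define j where "j = n - i"
    have j: "1 \<le> j" "j + 2 < n" using i by (simp_all add: j_def)
    have fj: "f (j-1) = -d" "f j = -c" "f (j+1) = -b" "f (j+2) = -a"
    proof -
      have "j - 1 = n + 1 - (i+2)" "j = n + 1 - (i+1)" "j + 1 = n + 1 - i" "j + 2 = n + 1 - (i - 1)"
        using i by (simp_all add: j_def)
      then show "f (j-1) = -d" "f j = -c" "f (j+1) = -b" "f (j+2) = -a"
        using fsym[of "i+2"] fsym[of "i+1"] fsym[of i] fsym[of "i-1"] i
        by (simp_all add: a_b_c_d_def)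
    qed
    have crj: "(f j - f (j-1))*(f j - f (j+1))*(f (j+2) - f (j-1))*(f (j+2) - f (j+1)) < 0"
    proof -
      have "(f j - f (j-1))*(f j - f (j+1))*(f (j+2) - f (j-1))*(f (j+2) - f (j+1))
            = (b-a)*(b-c)*(d-a)*(d-c)" unfolding fj by algebra
      then show ?thesis using cr by simp
    qed
    have Bj: "Bpt n A j = Pt (-d) (-c) (-b) (-a)"
      using Bpt_mid[of j n f, OF j crj] unfolding fj by (simp add: A_def)
    have Dn: "b+d-a-c \<noteq> 0" by (rule cross_D[OF cr])
    have Bj': "Pt (-d) (-c) (-b) (-a) = (- fst (Pt a b c d), snd (Pt a b c d))" by (rule Pt_mirror[OF Dn])
    define x y where "x = fst (Pt a b c d)" "y = snd (Pt a b c d)"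
    have Pxy: "Pt a b c d = (x, y)" by (simp add: x_y_def)
    have segb: "Pt a b c d \<in> closed_segment (par b) (par d)" using Pt_mem[OF cr] by simp
    have hb: "\<bar>b\<bar> \<le> \<eta>" "\<bar>d\<bar> \<le> \<eta>" using i by (auto simp: a_b_c_d_def intro: fc)
    have "\<bar>fst (Pt a b c d)\<bar> \<le> \<eta> \<and> \<bar>snd (Pt a b c d)\<bar> \<le> 3*\<eta>"
      by (rule seg_small[OF segb hb]) (use e0 in simp)
    then have yb: "-3*\<eta> \<le> y" by (simp add: x_y_def abs_le_iff)
    have inPR1: "(x,y) \<in> PR" using segb segPR[of i "i+2"] i Pxy by (auto simp: a_b_c_d_def)
    have inPR2: "(-x,y) \<in> PR"
    proof -
      have crj': "(-c - -d)*(-c - -b)*(-a - -d)*(-a - -b) < 0" using crj unfolding fj by simp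
      have "Pt (-d) (-c) (-b) (-a) \<in> closed_segment (par (-c)) (par (-a))" using Pt_mem[OF crj'] by simp
      moreover have "closed_segment (par (-c)) (par (-a)) \<subseteq> PR" using segPR[of j "j+2"] j fj by simp
      ultimately show ?thesis using Bj' Pxy by auto
    qed
    have inIR1: "(x,y) \<in> IR" using bIR[of i] i Bi Pxy by simp
    have inIR2: "(-x,y) \<in> IR" using bIR[of j] j Bj Bj' Pxy by simp
    have "(1/2::real) *\<^sub>R (x,y) + (1/2::real) *\<^sub>R (-x,y) \<in> IS"
      using inPR1 inPR2 inIR1 inIR2 by (intro convexD[OF cIS]) (auto simp: IS_def)
    then have "(0, y) \<in> IS" by simp
    then show ?thesis using yb by blast
  qed
  then obtain w where w: "(0, w) \<in> IS" "-3*\<eta> \<le> w" by blast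
  have vle: "v \<le> -1 + 2*\<eta>" using u0 e0 unfolding v_def by (simp add: mult_left_le)
  have uge: "u \<ge> 1 - 2*\<eta>"
  proof -
    have "u = 1 - 2*\<eta>*u" using u1 by (simp add: algebra_simps)
    moreover have "2*\<eta>*u \<le> 2*\<eta>" using u0 e0 by (simp add: mult_left_le)
    ultimately show ?thesis by simp
  qed
  define s where "s = min u (w - v)"
  have s1: "s \<ge> 1 - 5*\<eta>" using uge vle w(2) e0 by (simp add: s_def)
  have s0: "0 < s" using s1 e0 by simp
  have su: "s \<le> u" and swv: "s \<le> w - v" by (simp_all add: s_def)
  have wv: "0 < w - v" using s0 swv by simp
  have p1: "(s, v) \<in> IS"
  proof -
    have "((u-s)/(2*u)) *\<^sub>R (-u, v) + ((u+s)/(2*u)) *\<^sub>R (u, v) \<in> IS"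
      using L_IS R_IS su s0 u0 by (intro convexD[OF cIS]) (auto simp: field_simps)
    moreover have "((u-s)/(2*u)) *\<^sub>R (-u, v) + ((u+s)/(2*u)) *\<^sub>R (u, v) = (s, v)"
      using u0 by (simp add: field_simps)
    ultimately show ?thesis by simp
  qed
  have p2: "(-s, v) \<in> IS"
  proof -
    have "((u+s)/(2*u)) *\<^sub>R (-u, v) + ((u-s)/(2*u)) *\<^sub>R (u, v) \<in> IS"
      using L_IS R_IS su s0 u0 by (intro convexD[OF cIS]) (auto simp: field_simps)
    moreover have "((u+s)/(2*u)) *\<^sub>R (-u, v) + ((u-s)/(2*u)) *\<^sub>R (u, v) = (-s, v)"
      using u0 by (simp add: field_simps)
    ultimately show ?thesis by simp
  qed
  have pM: "(0, v) \<in> IS"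
  proof -
    have "(1/2::real) *\<^sub>R (-u, v) + (1/2::real) *\<^sub>R (u, v) \<in> IS"
      using L_IS R_IS by (intro convexD[OF cIS]) auto
    then show ?thesis by simp
  qed
  have p3: "(0, v + s) \<in> IS"
  proof -
    define t where "t = s/(w - v)"
    have t: "0 \<le> t" "t \<le> 1" using s0 swv wv by (auto simp: t_def field_simps)
    have "(1 - t) *\<^sub>R (0, v) + t *\<^sub>R (0, w) \<in> IS"
      using pM w(1) t by (intro convexD[OF cIS]) auto
    moreover have "(1 - t) *\<^sub>R (0::real, v) + t *\<^sub>R (0, w) = (0, v + s)"
    proof -
      have "t*(w - v) = s" using wv by (simp add: t_def)
      then have "(1 - t) * v + t*w = v + s" by (simp add: algebra_simps)
      then show ?thesis by simp
    qed
    ultimately show ?thesis by simp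
  qed
  have Tin_eq: "(\<lambda>p. s *\<^sub>R p + (0, v + s)) ` Tri = convex hull {(0, v+s), (s, v), (-s, v)}"
    unfolding Tri_img by simp
  have Tin: "(\<lambda>p. s *\<^sub>R p + (0, v + s)) ` Tri \<subseteq> IS"
    unfolding Tin_eq by (rule hull_minimal) (use p1 p2 p3 cIS in auto)
  have Tin_meas: "(\<lambda>p. s *\<^sub>R p + (0, v + s)) ` Tri \<in> lmeasurable"
    unfolding Tin_eq by (intro hull_lmeas) simp
  have IR_meas: "IR \<in> lmeasurable" unfolding IR_def inner_region_def by (intro hull_lmeas) simp
  have PR_meas: "PR \<in> lmeasurable" unfolding PR_def polygon_region_def by (intro hull_lmeas) simp
  have ain: "s^2 * m \<le> area IR"
  proof -
    have "measure lebesgue ((\<lambda>p. s *\<^sub>R p + (0, v + s)) ` Tri) \<le> measure lebesgue IR"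
      by (rule meas_mono[OF _ Tin_meas IR_meas]) (use Tin in \<open>auto simp: IS_def\<close>)
    then show ?thesis unfolding Tri_meas area_def m_def .
  qed
  have aout1: "s^2 * m \<le> area PR"
  proof -
    have "measure lebesgue ((\<lambda>p. s *\<^sub>R p + (0, v + s)) ` Tri) \<le> measure lebesgue PR"
      by (rule meas_mono[OF _ Tin_meas PR_meas]) (use Tin in \<open>auto simp: IS_def\<close>)
    then show ?thesis unfolding Tri_meas area_def m_def .
  qed
  have Tout_eq: "(\<lambda>p. (1+\<eta>) *\<^sub>R p + (0, \<eta>)) ` Tri = convex hull {(0, \<eta>), (1+\<eta>, -1), (-(1+\<eta>), -1)}"
    unfolding Tri_img by (simp add: algebra_simps)
  have vT: "par (f k) \<in> convex hull {(0, \<eta>), (1+\<eta>, -1), (-(1+\<eta>), -1)}" if k: "k < n" for k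
  proof -
    have "\<bar>f k\<bar> \<le> \<eta> \<or> (1 - \<eta> \<le> \<bar>f k\<bar> \<and> \<bar>f k\<bar> \<le> 1)"
    proof -
      consider "k = 0" | "k = 1" | "k = 2" | "k = n-1" | "3 \<le> k" "k \<le> n-2" using k by linarith
      then show ?thesis
      proof cases
        case 1 then show ?thesis using f0 e0 by simp
      next
        case 2 then show ?thesis using f1 e0 by simp
      next
        case 3 then show ?thesis using f2 e0 by simp
      next
        case 4 then show ?thesis using fl e0 by simp
      next
        case 5 then show ?thesis using fc by simp
      qed
    qed
    then have "-1 \<le> -((f k)^2) \<and> \<bar>f k\<bar> \<le> \<eta> - (-((f k)^2))" using e0 by (intro vert_ok) auto
    then show ?thesis unfolding par_def using e0 by (intro tri_mem) auto
  qed
  have PR_sub: "PR \<subseteq> (\<lambda>p. (1+\<eta>) *\<^sub>R p + (0, \<eta>)) ` Tri"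
    unfolding Tout_eq PR_def polygon_region_def A_def
    by (rule hull_minimal) (use vT in auto)
  have Tout_meas: "(\<lambda>p. (1+\<eta>) *\<^sub>R p + (0, \<eta>)) ` Tri \<in> lmeasurable"
    unfolding Tout_eq by (intro hull_lmeas) simp
  have aout2: "area PR \<le> (1+\<eta>)^2 * m"
  proof -
    have "measure lebesgue PR \<le> measure lebesgue ((\<lambda>p. (1+\<eta>) *\<^sub>R p + (0, \<eta>)) ` Tri)"
      by (rule meas_mono[OF PR_sub PR_meas Tout_meas])
    then show ?thesis unfolding Tri_meas area_def m_def .
  qed
  have sm: "0 < s^2 * m" using s0 m0 by simp
  have "(s^2 * m) / ((1+\<eta>)^2 * m) \<le> area IR / area PR"
    by (rule frac_le) (use ain aout1 aout2 sm in auto)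
  moreover have "(s^2 * m) / ((1+\<eta>)^2 * m) = s^2 / (1+\<eta>)^2" using m0 by simp
  moreover have "1 - \<epsilon> < s^2 / (1+\<eta>)^2"
  proof -
    have "(1 - 5*\<eta>)^2 \<le> s^2" using s1 e0 by (intro power_mono) auto
    moreover have "1 - 10*\<eta> \<le> (1 - 5*\<eta>)^2" by (simp add: power2_eq_square algebra_simps)
    ultimately have s2: "1 - 10*\<eta> \<le> s^2" by simp
    have h2: "(1+\<eta>)^2 \<le> 1 + 3*\<eta>" using e0 by (simp add: power2_eq_square algebra_simps)
    have "(1 - \<epsilon>)*(1+\<eta>)^2 < 1 - 10*\<eta>"
    proof (cases "\<epsilon> \<le> 1")
      case True
      then have "(1 - \<epsilon>)*(1+\<eta>)^2 \<le> (1 - \<epsilon>)*(1 + 3*\<eta>)" using h2 by (intro mult_left_mono) auto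
      also have "\<dots> = 1 + 3*\<eta> - \<epsilon> - 3*\<epsilon>*\<eta>" by (simp add: algebra_simps)
      also have "\<dots> \<le> 1 + 3*\<eta> - \<epsilon>" using ep e0 by simp
      also have "\<dots> < 1 - 10*\<eta>" using e0 ep by simp
      finally show ?thesis .
    next
      case False
      then have "(1 - \<epsilon>)*(1+\<eta>)^2 \<le> 0" by (intro mult_nonpos_nonneg) auto
      then show ?thesis using e0 by simp
    qed
    then have "(1 - \<epsilon>)*(1+\<eta>)^2 < s^2" using s2 by simp
    moreover have "0 < (1+\<eta>)^2" using e0 by simp
    ultimately show ?thesis by (simp add: less_divide_eq)
  qed
  ultimately have "1 - \<epsilon> < area IR / area PR" by simp
  then show ?thesis using conv unfolding IR_def PR_def by blast
qed

theorem theorem1p1: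
  shows "(\<forall>n::nat. n \<ge> 5 \<longrightarrow> (\<forall>\<epsilon>::real. \<epsilon> > 0 \<longrightarrow>
            (\<exists>A. convex_ngon n A \<and>
                 area (inner_region n A) / area (polygon_region n A) < \<epsilon>)))
       \<and> (\<forall>n::nat. n \<ge> 6 \<longrightarrow> (\<forall>\<epsilon>::real. \<epsilon> > 0 \<longrightarrow>
            (\<exists>A. convex_ngon n A \<and>
                 area (inner_region n A) / area (polygon_region n A) > 1 - \<epsilon>)))"
    using part_a part_b by blast

end
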